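(* Let $n\ge 4$ and let $\mathcal{G}=\{G_1,\ldots,G_n\}$ be a family of graphs on the same vertex set of size $n$, where $G_i\cong K_1\vee(K_{n-2}\cup K_1)$ for every $i$. Then $\mathcal{G}$ admits a rainbow Hamiltonian cycle unless $G_1=G_2=\cdots=G_n$.
   Context: $K_1\vee(K_{n-2}\cup K_1)$ is $K_{n-1}$ plus one pendant vertex adjacent to one vertex of the $K_{n-1}$. $G_i=G_j$ means equal edge sets on the common vertex set. A rainbow Hamiltonian cycle in $\mathcal{G}$ is a Hamiltonian cycle on the common vertex set whose $n$ edges can be labeled $e_1,\ldots,e_n$ with $e_i\in E(G_i)$ for each $i$. *)

theory Defs
  imports Main
begin

definition simple_graph :: "'a set \<Rightarrow> 'a set set \<Rightarrow> bool" where
  "simple_graph V E \<longleftrightarrow> (\<forall>e\<in>E. \<exists>x y. x \<in> V \<and> y \<in> V \<and> x \<noteq> y \<and> e = {x, y})"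

definition graph_iso :: "'a set \<Rightarrow> 'a set set \<Rightarrow> 'b set \<Rightarrow> 'b set set \<Rightarrow> bool" where
  "graph_iso V E W F \<longleftrightarrow> (\<exists>f. bij_betw f V W \<and> (\<lambda>e. f ` e) ` E = F)"

text \<open>The graph K_1 join (K_{n-2} union K_1) on vertex set {0..<n}: a complete
  graph on {0..<n-1} plus the pendant vertex n-1 adjacent to vertex 0.\<close>
definition pendant_clique :: "nat \<Rightarrow> nat set set" where
  "pendant_clique n = {{i, j} | i j. i < n - 1 \<and> j < n - 1 \<and> i \<noteq> j} \<union> {{0, n - 1}}"

text \<open>A Hamiltonian cycle on V (with card V = n) is given by a list vs of the
  distinct vertices of V; its k-th edge (k < n) joins vs!k and vs!((k+1) mod n).\<close>
definition ham_cycle_list :: "'a set \<Rightarrow> 'a list \<Rightarrow> bool" where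
  "ham_cycle_list V vs \<longleftrightarrow> distinct vs \<and> set vs = V"

definition cycle_edge :: "'a list \<Rightarrow> nat \<Rightarrow> 'a set" where
  "cycle_edge vs k = {vs ! k, vs ! ((k + 1) mod length vs)}"

definition has_rainbow_ham_cycle :: "'a set \<Rightarrow> nat \<Rightarrow> (nat \<Rightarrow> 'a set set) \<Rightarrow> bool" where
  "has_rainbow_ham_cycle V n G \<longleftrightarrow>
     (\<exists>vs \<sigma>. ham_cycle_list V vs \<and> bij_betw \<sigma> {..<n} {1..n} \<and>
        (\<forall>k<n. cycle_edge vs k \<in> G (\<sigma> k)))"

end

theory Submission
  imports Defs
begin


definition Gpc :: "'a set \<Rightarrow> 'a \<Rightarrow> 'a \<Rightarrow> 'a set set" where
 "Gpc V p c = {{x,y}|x y. x\<in>V \<and> y\<in>V \<and> x\<noteq>y \<and> x\<noteq>p \<and> y\<noteq>p} \<union> {{p,c}}"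

lemma iso_char:
  assumes n2: "n \<ge> 2" and sg: "simple_graph V E" and iso: "graph_iso V E {0..<n} (pendant_clique n)"
  shows "\<exists>p c. p\<in>V \<and> c\<in>V \<and> p\<noteq>c \<and> E = Gpc V p c"
proof -
  obtain f where bij: "bij_betw f V {0..<n}" and img: "(\<lambda>e. f`e) ` E = pendant_clique n"
    using iso unfolding graph_iso_def by blast
  have inj: "inj_on f V" using bij bij_betw_imp_inj_on by blast
  have fV: "f ` V = {0..<n}" using bij bij_betw_imp_surj_on by blast
  have "n - 1 \<in> f ` V" using fV n2 by simp
  then obtain p where p: "p \<in> V" "f p = n - 1" by (metis imageE)
  have "0 \<in> f ` V" using fV n2 by simp
  then obtain c where c: "c \<in> V" "f c = 0" by (metis imageE)
  have pc: "p \<noteq> c" using p c n2 by auto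
  have fx: "\<And>x. x \<in> V \<Longrightarrow> f x < n" using fV by auto
  have sub: "\<And>e. e \<in> E \<Longrightarrow> e \<subseteq> V" using sg unfolding simple_graph_def by fastforce
  have bk: "\<And>x y. x \<in> V \<Longrightarrow> y \<in> V \<Longrightarrow> {f x, f y} \<in> pendant_clique n \<Longrightarrow> {x,y} \<in> E"
  proof -
    fix x y assume xy: "x \<in> V" "y \<in> V" "{f x, f y} \<in> pendant_clique n"
    then obtain e where e: "e \<in> E" "f ` e = {f x, f y}" using img by (metis imageE)
    have "f ` e = f ` {x,y}" using e by simp
    hence "e = {x,y}" using inj_on_image_eq_iff[OF inj, of e "{x,y}"] sub[OF e(1)] xy by simp
    thus "{x,y} \<in> E" using e by simp
  qed
  have "Gpc V p c \<subseteq> E"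
  proof
    fix e assume "e \<in> Gpc V p c"
    then consider (a) x y where "e = {x,y}" "x\<in>V" "y\<in>V" "x\<noteq>y" "x\<noteq>p" "y\<noteq>p" | (b) "e = {p,c}"
      unfolding Gpc_def by blast
    then show "e \<in> E"
    proof cases
      case a
      have "f x \<noteq> n - 1" "f y \<noteq> n - 1" "f x \<noteq> f y" using a p inj inj_on_def by metis+
      hence "f x < n - 1" "f y < n - 1" using fx a by fastforce+
      hence "{f x, f y} \<in> pendant_clique n" unfolding pendant_clique_def using \<open>f x \<noteq> f y\<close> by blast
      thus ?thesis using bk a by blast
    next
      case b
      have "{f p, f c} \<in> pendant_clique n" unfolding pendant_clique_def using p c by auto
      thus ?thesis using bk b p c by blast
    qed
  qed
  moreover have "E \<subseteq> Gpc V p c"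
  proof
    fix e assume e: "e \<in> E"
    then obtain x y where xy: "x\<in>V" "y\<in>V" "x\<noteq>y" "e = {x,y}" using sg unfolding simple_graph_def by meson
    have "f ` e \<in> pendant_clique n" using img e by blast
    hence "{f x, f y} \<in> pendant_clique n" using xy by simp
    hence "{f x, f y} = {0, n - 1} \<or> (\<exists>i j. {f x, f y} = {i,j} \<and> i < n - 1 \<and> j < n - 1 \<and> i \<noteq> j)"
      unfolding pendant_clique_def by simp
    then consider (a) i j where "{f x, f y} = {i,j}" "i < n - 1" "j < n - 1" | (b) "{f x, f y} = {0, n - 1}"
      by meson
    then show "e \<in> Gpc V p c"
    proof cases
      case a
      hence "f x < n - 1" "f y < n - 1" by (auto simp: doubleton_eq_iff)
      hence "x \<noteq> p" "y \<noteq> p" using p by auto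
      thus ?thesis unfolding Gpc_def using xy by blast
    next
      case b
      hence "(f x = 0 \<and> f y = n - 1) \<or> (f x = n - 1 \<and> f y = 0)" by (auto simp: doubleton_eq_iff)
      hence "(x = c \<and> y = p) \<or> (x = p \<and> y = c)" using inj p c xy unfolding inj_on_def by metis
      thus ?thesis unfolding Gpc_def using xy by blast
    qed
  qed
  ultimately show ?thesis using p c pc by blast
qed



lemma arrange:
  fixes p :: "nat \<Rightarrow> 'a"
  assumes "finite I" "finite W" "card I = card W" "p ` I \<subseteq> W"
  shows "\<exists>gs vs. distinct gs \<and> set gs = I \<and> distinct vs \<and> set vs = W \<and>
     (\<forall>t<length gs. \<exists>r\<le>t. r < length vs \<and> vs!r = p (gs!t) \<and> t - r < card {i\<in>I. p i = p (gs!t)})"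
  using assms
proof (induction "card I" arbitrary: I W rule: less_induct)
  case less
  show ?case
  proof (cases "I = {}")
    case True
    then have "W = {}" using less by simp
    then show ?thesis using True by (intro exI[of _ "[]"]) simp
  next
    case False
    then obtain i where i: "i \<in> I" by blast
    define u where "u = p i"
    define Iu where "Iu = {j\<in>I. p j = u}"
    define m where "m = card Iu"
    define I' where "I' = I - Iu"
    have IuI: "Iu \<subseteq> I" unfolding Iu_def by blast
    have finIu: "finite Iu" using less(2) IuI finite_subset by blast
    have iIu: "i \<in> Iu" using i unfolding Iu_def u_def by simp
    have "card Iu > 0" by (rule card_gt_0_iff[THEN iffD2]) (use finIu iIu in blast)
    hence m1: "m \<ge> 1" unfolding m_def by simp
    have mI: "m \<le> card I" unfolding m_def using card_mono[OF less(2) IuI] .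
    have cardI': "card I' = card I - m" unfolding I'_def m_def using card_Diff_subset[OF finIu IuI] .
    have finI': "finite I'" unfolding I'_def using less(2) by simp
    have pI: "p ` I = insert u (p ` I')"
    proof
      show "p ` I \<subseteq> insert u (p ` I')" unfolding I'_def Iu_def by blast
      show "insert u (p ` I') \<subseteq> p ` I" unfolding I'_def using i u_def by blast
    qed
    have "card (p ` I') \<le> card I'" using card_image_le[OF finI'] .
    hence cpI: "card (p ` I) \<le> card I - m + 1" using pI cardI' card_insert_le_m1
      by (metis Suc_eq_plus1 card_insert_if finI' finite_imageI le_SucI not_less_eq_eq)
    have finW: "finite W" using less by simp
    have "card (W - p ` I) = card W - card (p ` I)"
      using card_Diff_subset[OF finite_imageI[OF less(2)] less(5)] .
    hence "m - 1 \<le> card (W - p ` I)" using cpI less(4) mI by linarith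
    then obtain Z where Z: "Z \<subseteq> W - p ` I" "card Z = m - 1" "finite Z"
      using obtain_subset_with_card_n by metis
    define W' where "W' = W - insert u Z"
    have uZ: "u \<notin> Z" using Z(1) i u_def by blast
    have uW: "u \<in> W" using less(5) i u_def by blast
    have cuZ: "card (insert u Z) = m" using uZ Z m1 by simp
    have uZW: "insert u Z \<subseteq> W" using uW Z(1) by blast
    have cardW': "card W' = card W - m" unfolding W'_def
      using card_Diff_subset[OF _ uZW] Z(3) cuZ by simp
    have pI': "p ` I' \<subseteq> W'"
    proof
      fix y assume "y \<in> p ` I'"
      then obtain j where j: "j \<in> I'" "y = p j" by blast
      have "p j \<in> W" using j less(5) unfolding I'_def by blast
      moreover have "p j \<noteq> u" using j unfolding I'_def Iu_def by blast
      moreover have "p j \<notin> Z" using j Z(1) unfolding I'_def by blast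
      ultimately show "y \<in> W'" unfolding W'_def using j by blast
    qed
    have lt: "card I' < card I" using cardI' m1 mI by linarith
    have finW': "finite W'" unfolding W'_def using finW by simp
    have cIW': "card I' = card W'" using cardI' cardW' less(4) by simp
    obtain gs' vs' where IH: "distinct gs'" "set gs' = I'" "distinct vs'" "set vs' = W'"
      "\<forall>t<length gs'. \<exists>r\<le>t. r < length vs' \<and> vs'!r = p (gs'!t) \<and> t - r < card {i\<in>I'. p i = p (gs'!t)}"
      using less(1)[OF lt finI' finW' cIW' pI'] by blast
    obtain xs where xs: "set xs = Iu" "distinct xs" using finite_distinct_list[OF finIu] by blast
    obtain zs where zs: "set zs = Z" "distinct zs" using finite_distinct_list[OF Z(3)] by blast
    have lxs: "length xs = m" using xs m_def distinct_card by metis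
    have "length zs = m - 1" using zs Z(2) distinct_card by metis
    hence lzs: "length (u # zs) = m" using m1 by simp
    define gs where "gs = xs @ gs'"
    define vs where "vs = (u # zs) @ vs'"
    have "distinct gs" unfolding gs_def using xs IH unfolding I'_def by auto
    moreover have "set gs = I" unfolding gs_def using xs IH IuI unfolding I'_def by auto
    moreover have "distinct vs" unfolding vs_def using zs IH uZ unfolding W'_def by auto
    moreover have "set vs = W" unfolding vs_def using zs IH uZW unfolding W'_def by auto
    moreover have "\<forall>t<length gs. \<exists>r\<le>t. r < length vs \<and> vs!r = p (gs!t) \<and> t - r < card {i\<in>I. p i = p (gs!t)}"
    proof (intro allI impI)
      fix t assume t: "t < length gs"
      show "\<exists>r\<le>t. r < length vs \<and> vs!r = p (gs!t) \<and> t - r < card {i\<in>I. p i = p (gs!t)}"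
      proof (cases "t < m")
        case True
        have g: "gs ! t = xs ! t" unfolding gs_def using True lxs by (simp add: nth_append)
        have "xs ! t \<in> Iu" using xs True lxs nth_mem by metis
        hence pu: "p (gs!t) = u" using g unfolding Iu_def by simp
        have "vs ! 0 = u" unfolding vs_def by simp
        moreover have "0 < length vs" unfolding vs_def by simp
        moreover have "t - 0 < card {i\<in>I. p i = p (gs!t)}" using pu True m_def Iu_def by simp
        ultimately show ?thesis using pu by (intro exI[of _ 0]) simp
      next
        case False
        have g: "gs ! t = gs' ! (t - m)" unfolding gs_def using False lxs by (simp add: nth_append)
        have tm: "t - m < length gs'" using t False lxs unfolding gs_def by simp
        then obtain r' where r': "r' \<le> t - m" "r' < length vs'" "vs'!r' = p (gs'!(t-m))"
          "t - m - r' < card {i\<in>I'. p i = p (gs'!(t-m))}" using IH(5) by blast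
        have "vs ! (length (u # zs) + r') = vs' ! r'" unfolding vs_def by (rule nth_append_length_plus)
        hence v: "vs ! (r' + m) = vs' ! r'" using lzs by (metis add.commute)
        have "card {i\<in>I'. p i = p (gs'!(t-m))} \<le> card {i\<in>I. p i = p (gs'!(t-m))}"
          by (rule card_mono) (use less(2) in \<open>auto simp: I'_def\<close>)
        hence "t - (r' + m) < card {i\<in>I. p i = p (gs!t)}" unfolding g using r'(4) by linarith
        moreover have "r' + m \<le> t" using r'(1) False by linarith
        moreover have "r' + m < length vs" unfolding vs_def using lzs r'(2) by simp
        ultimately show ?thesis using v r'(3) g by metis
      qed
    qed
    ultimately show ?thesis by blast
  qed
qed



lemma Gpc_mem1: "x\<in>V \<Longrightarrow> y\<in>V \<Longrightarrow> x\<noteq>y \<Longrightarrow> x\<noteq>p \<Longrightarrow> y\<noteq>p \<Longrightarrow> {x,y} \<in> Gpc V p c"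
  unfolding Gpc_def by blast

lemma Gpc_mem2: "{p,c} \<in> Gpc V p c"
  unfolding Gpc_def by blast

lemma mod_facts:
  assumes "k < (n::nat)" "n \<ge> 2"
  shows "(1+k) mod n = (if k+1 < n then k+1 else 0)"
    and "(1 + (k+1) mod n) mod n = (if k+2 < n then k+2 else if k+2 = n then 0 else 1)"
proof -
  show "(1+k) mod n = (if k+1 < n then k+1 else 0)"
  proof (cases "k+1 < n")
    case False
    hence "1 + k = n" using assms by linarith
    thus ?thesis by simp
  qed simp
  show "(1 + (k+1) mod n) mod n = (if k+2 < n then k+2 else if k+2 = n then 0 else 1)"
  proof (cases "k+2 < n")
    case True then show ?thesis by simp
  next
    case False
    then consider "k+2 = n" | "k+1 = n" using assms by linarith
    then show ?thesis using assms by cases auto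
  qed
qed

lemma generic:
  fixes p c :: "nat \<Rightarrow> 'a"
  assumes fin: "finite V" and cV: "card V = n" and n2: "n \<ge> 2"
    and pV: "\<forall>i\<in>{1..n}. p i \<in> V"
    and small: "\<forall>u. card {i\<in>{1..n}. p i = u} \<le> n - 2"
  shows "has_rainbow_ham_cycle V n (\<lambda>i. Gpc V (p i) (c i))"
proof -
  have "p ` {1..n} \<subseteq> V" using pV by blast
  then obtain gs vs where A: "distinct gs" "set gs = {1..n}" "distinct vs" "set vs = V"
    "\<forall>t<length gs. \<exists>r\<le>t. r < length vs \<and> vs!r = p (gs!t) \<and> t - r < card {i\<in>{1..n}. p i = p (gs!t)}"
    using arrange[of "{1..n}" V p] fin cV by auto
  have lg: "length gs = n" using A(1,2) distinct_card by fastforce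
  have lv: "length vs = n" using A(3,4) cV distinct_card by fastforce
  define ws where "ws = rotate 1 vs"
  have ham: "ham_cycle_list V ws" unfolding ham_cycle_list_def ws_def using A by simp
  have lw: "length ws = n" unfolding ws_def using lv by simp
  have bij: "bij_betw ((!) gs) {..<n} {1..n}" by (rule bij_betw_nth) (use A lg in auto)
  have edges: "\<forall>k<n. cycle_edge ws k \<in> Gpc V (p (gs!k)) (c (gs!k))"
  proof (intro allI impI)
    fix k assume k: "k < n"
    obtain r where r: "r \<le> k" "r < n" "vs!r = p (gs!k)" "k - r < card {i\<in>{1..n}. p i = p (gs!k)}"
      using A(5) k lg lv by auto
    have "k - r < n - 2" using r(4) small by (meson order_less_le_trans)
    hence kr: "k + 3 \<le> r + n" using r(1) by linarith
    define a where "a = (1+k) mod n"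
    define b where "b = (1 + (k+1) mod n) mod n"
    have wj: "\<And>j. j < n \<Longrightarrow> ws ! j = vs ! ((1+j) mod n)"
      unfolding ws_def using lv nth_rotate by metis
    have "(k+1) mod n < n" using n2 by simp
    hence ce: "cycle_edge ws k = {vs!a, vs!b}"
      unfolding cycle_edge_def a_def b_def lw using wj k by simp
    have an: "a < n" unfolding a_def using n2 by simp
    have bn: "b < n" unfolding b_def using n2 by simp
    have ab: "a \<noteq> b" "a \<noteq> r" "b \<noteq> r"
      unfolding a_def b_def mod_facts[OF k n2] using r(1) kr k by auto
    have "vs!a \<noteq> vs!b" "vs!a \<noteq> vs!r" "vs!b \<noteq> vs!r"
      using ab an bn r(2) lv A(3) nth_eq_iff_index_eq by metis+
    moreover have "vs!a \<in> V" "vs!b \<in> V" using an bn lv A(4) nth_mem by metis+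
    ultimately show "cycle_edge ws k \<in> Gpc V (p (gs!k)) (c (gs!k))"
      unfolding ce using Gpc_mem1 r(3) by metis
  qed
  show ?thesis unfolding has_rainbow_ham_cycle_def using ham bij edges by blast
qed



lemma special:
  fixes p c :: "nat \<Rightarrow> 'a"
  assumes fin: "finite V" and cV: "card V = n" and n4: "n \<ge> 4"
    and pV: "\<forall>i\<in>{1..n}. p i \<in> V" and cVV: "\<forall>i\<in>{1..n}. c i \<in> V"
    and pc: "\<forall>i\<in>{1..n}. p i \<noteq> c i"
    and i0: "i0 \<in> {1..n}" and j0: "j0 \<in> {1..n}" and ij: "i0 \<noteq> j0"
    and x: "x \<in> V" "x \<noteq> p i0" "x \<noteq> c i0"
    and e1: "{p i0, x} \<in> Gpc V (p j0) (c j0)"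
    and rest: "\<forall>i\<in>{1..n} - {i0,j0}. p i = p i0"
  shows "has_rainbow_ham_cycle V n (\<lambda>i. Gpc V (p i) (c i))"
proof -
  define u where "u = p i0"
  define c0 where "c0 = c i0"
  have uV: "u \<in> V" using pV i0 u_def by blast
  have c0V: "c0 \<in> V" using cVV i0 c0_def by blast
  have uc0: "u \<noteq> c0" using pc i0 u_def c0_def by blast
  define R where "R = V - {c0, u, x}"
  have finR: "finite R" unfolding R_def using fin by simp
  have "card {c0, u, x} = 3" using uc0 x u_def c0_def by simp
  hence cR: "card R = n - 3" unfolding R_def using card_Diff_subset[of "{c0,u,x}" V] uV c0V x(1) cV by simp
  obtain rs where rs: "set rs = R" "distinct rs" using finite_distinct_list[OF finR] by blast
  have lrs: "length rs = n - 3" using rs cR distinct_card by metis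
  define vs where "vs = c0 # u # x # rs"
  have dvs: "distinct vs" unfolding vs_def using rs uc0 x u_def c0_def unfolding R_def by auto
  have svs: "set vs = V" unfolding vs_def using rs uV c0V x(1) unfolding R_def by auto
  have lvs: "length vs = n" unfolding vs_def using lrs n4 by simp
  have ham: "ham_cycle_list V vs" unfolding ham_cycle_list_def using dvs svs by simp
  define Q where "Q = {1..n} - {i0, j0}"
  have finQ: "finite Q" unfolding Q_def by simp
  have cQ: "card Q = n - 2" unfolding Q_def using card_Diff_subset[of "{i0,j0}" "{1..n}"] i0 j0 ij by simp
  obtain qs where qs: "set qs = Q" "distinct qs" using finite_distinct_list[OF finQ] by blast
  have lqs: "length qs = n - 2" using qs cQ distinct_card by metis
  define gs where "gs = i0 # j0 # qs"
  have dgs: "distinct gs" unfolding gs_def using qs ij unfolding Q_def by auto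
  have "set gs = insert i0 (insert j0 Q)" unfolding gs_def using qs by simp
  also have "\<dots> = {1..n}" unfolding Q_def using i0 j0 by blast
  finally have sgs: "set gs = {1..n}" .
  have lgs: "length gs = n" unfolding gs_def using lqs n4 by simp
  have bij: "bij_betw ((!) gs) {..<n} {1..n}" by (rule bij_betw_nth) (use dgs sgs lgs in auto)
  have v1: "vs ! 1 = u" unfolding vs_def by simp
  have notu: "\<And>j. j < n \<Longrightarrow> j \<noteq> 1 \<Longrightarrow> vs ! j \<noteq> u"
  proof -
    fix j assume "j < n" "j \<noteq> 1"
    thus "vs ! j \<noteq> u" using nth_eq_iff_index_eq[OF dvs, of j 1] lvs n4 v1 by auto
  qed
  have edges: "\<forall>k<n. cycle_edge vs k \<in> Gpc V (p (gs!k)) (c (gs!k))"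
  proof (intro allI impI)
    fix k assume k: "k < n"
    consider "k = 0" | "k = 1" | "k \<ge> 2" by linarith
    then show "cycle_edge vs k \<in> Gpc V (p (gs!k)) (c (gs!k))"
    proof cases
      case 1
      have "cycle_edge vs k = {c0, u}" unfolding cycle_edge_def 1 lvs vs_def using n4 by simp
      also have "\<dots> = {p i0, c i0}" unfolding u_def c0_def by blast
      finally show ?thesis using Gpc_mem2 unfolding gs_def 1 by simp
    next
      case 2
      have "cycle_edge vs k = {u, x}" unfolding cycle_edge_def 2 lvs vs_def using n4 by simp
      thus ?thesis using e1 unfolding gs_def 2 u_def by simp
    next
      case 3
      have kk: "k = Suc (Suc (k - 2))" using 3 by simp
      have "gs ! k = qs ! (k - 2)" unfolding gs_def by (subst kk) simp
      moreover have "k - 2 < length qs" using lqs k 3 by linarith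
      hence "qs ! (k - 2) \<in> Q" using qs(1) nth_mem by blast
      ultimately have pg: "p (gs ! k) = u" using rest unfolding Q_def u_def by auto
      define b where "b = (k + 1) mod n"
      have bn: "b < n" unfolding b_def using n4 by simp
      have bv: "b = (if k + 1 < n then k + 1 else 0)"
      proof (cases "k + 1 < n")
        case True thus ?thesis unfolding b_def by simp
      next
        case False
        hence "k + 1 = n" using k by linarith
        thus ?thesis unfolding b_def by simp
      qed
      have b1: "b \<noteq> 1" using bv 3 by auto
      have kb: "k \<noteq> b" using bv 3 by auto
      have ce: "cycle_edge vs k = {vs ! k, vs ! b}" unfolding cycle_edge_def b_def lvs by simp
      have "vs ! k \<noteq> vs ! b" using kb k bn dvs lvs nth_eq_iff_index_eq by metis
      moreover have "vs ! k \<in> V" "vs ! b \<in> V" using k bn svs lvs nth_mem by metis+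
      moreover have "vs ! k \<noteq> u" "vs ! b \<noteq> u" using notu k bn b1 3 by auto
      ultimately show ?thesis unfolding ce pg using Gpc_mem1 by metis
    qed
  qed
  show ?thesis unfolding has_rainbow_ham_cycle_def using ham bij edges by blast
qed



lemma card3: "card {a, b, c::'a} \<le> 3"
  by (auto simp: card_insert_if)

theorem mainTheorem4:
  fixes V :: "'a set" and n :: nat and G :: "nat \<Rightarrow> 'a set set"
  assumes "n \<ge> 4"
    and "finite V" and "card V = n"
    and "\<And>i. i \<in> {1..n} \<Longrightarrow> simple_graph V (G i)"
    and "\<And>i. i \<in> {1..n} \<Longrightarrow> graph_iso V (G i) {0..<n} (pendant_clique n)"
    and "\<not> (\<forall>i\<in>{1..n}. \<forall>j\<in>{1..n}. G i = G j)"
  shows "has_rainbow_ham_cycle V n G"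
proof -
  have n2: "n \<ge> 2" using assms(1) by simp
  have "\<forall>i\<in>{1..n}. \<exists>q. fst q \<in> V \<and> snd q \<in> V \<and> fst q \<noteq> snd q \<and> G i = Gpc V (fst q) (snd q)"
  proof
    fix i assume "i \<in> {1..n}"
    then obtain a b where "a \<in> V" "b \<in> V" "a \<noteq> b" "G i = Gpc V a b"
      using iso_char[OF n2 assms(4) assms(5)] by blast
    thus "\<exists>q. fst q \<in> V \<and> snd q \<in> V \<and> fst q \<noteq> snd q \<and> G i = Gpc V (fst q) (snd q)"
      by (intro exI[of _ "(a,b)"]) simp
  qed
  from bchoice[OF this] obtain f where f:
    "\<forall>i\<in>{1..n}. fst (f i) \<in> V \<and> snd (f i) \<in> V \<and> fst (f i) \<noteq> snd (f i) \<and> G i = Gpc V (fst (f i)) (snd (f i))"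
    by blast
  define p where "p i = fst (f i)" for i
  define c where "c i = snd (f i)" for i
  have pV: "\<forall>i\<in>{1..n}. p i \<in> V" using f by (simp add: p_def)
  have cVV: "\<forall>i\<in>{1..n}. c i \<in> V" using f by (simp add: c_def)
  have pc: "\<forall>i\<in>{1..n}. p i \<noteq> c i" using f by (simp add: p_def c_def)
  have Geq: "\<forall>i\<in>{1..n}. G i = Gpc V (p i) (c i)" using f by (simp add: p_def c_def)
  have red: "has_rainbow_ham_cycle V n G" if h: "has_rainbow_ham_cycle V n (\<lambda>i. Gpc V (p i) (c i))"
  proof -
    obtain vs \<sigma> where vs: "ham_cycle_list V vs" "bij_betw \<sigma> {..<n} {1..n}"
      "\<forall>k<n. cycle_edge vs k \<in> Gpc V (p (\<sigma> k)) (c (\<sigma> k))"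
      using h unfolding has_rainbow_ham_cycle_def by blast
    have "\<forall>k<n. cycle_edge vs k \<in> G (\<sigma> k)"
    proof (intro allI impI)
      fix k assume k: "k < n"
      hence "\<sigma> k \<in> {1..n}" using bij_betw_apply[OF vs(2)] by simp
      thus "cycle_edge vs k \<in> G (\<sigma> k)" using Geq vs(3) k by simp
    qed
    thus ?thesis unfolding has_rainbow_ham_cycle_def using vs(1,2) by blast
  qed
  show ?thesis
  proof (cases "\<forall>u. card {i\<in>{1..n}. p i = u} \<le> n - 2")
    case True
    show ?thesis by (rule red, rule generic) (use assms(2,3) n2 pV True in auto)
  next
    case False
    then obtain u where "\<not> card {i\<in>{1..n}. p i = u} \<le> n - 2" by blast
    hence cu: "card {i\<in>{1..n}. p i = u} \<ge> n - 1" using assms(1) by linarith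
    define S where "S = {i\<in>{1..n}. p i = u}"
    show ?thesis
    proof (cases "\<exists>j0\<in>{1..n}. p j0 \<noteq> u")
      case True
      then obtain j0 where j0: "j0 \<in> {1..n}" "p j0 \<noteq> u" by blast
      have sub: "S \<subseteq> {1..n} - {j0}" unfolding S_def using j0 by blast
      have cj: "card ({1..n} - {j0}) = n - 1" using j0 by simp
      have "card S \<le> n - 1" using card_mono[OF _ sub] cj by simp
      hence "card S = card ({1..n} - {j0})" using cu cj S_def by simp
      hence Seq: "S = {1..n} - {j0}" using card_subset_eq[OF _ sub] by simp
      have "card S > 0" using cu S_def assms(1) by simp
      hence "S \<noteq> {}" by auto
      then obtain i0 where i0S: "i0 \<in> S" by blast
      have i0m: "i0 \<in> {1..n} - {j0}" using i0S Seq by simp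
      have i0: "i0 \<in> {1..n}" "p i0 = u" "i0 \<noteq> j0" using i0m i0S unfolding S_def by auto
      have "\<not> V \<subseteq> {u, c i0, p j0}"
      proof
        assume "V \<subseteq> {u, c i0, p j0}"
        hence "card V \<le> card {u, c i0, p j0}" by (intro card_mono) auto
        thus False using card3[of u "c i0" "p j0"] assms(1,3) by linarith
      qed
      then obtain x where x: "x \<in> V" "x \<noteq> u" "x \<noteq> c i0" "x \<noteq> p j0" by blast
      have uV: "u \<in> V" using pV i0 by metis
      show ?thesis
      proof (rule red, rule special[OF assms(2,3,1) pV cVV pc i0(1) j0(1) i0(3)])
        show "x \<in> V" "x \<noteq> p i0" "x \<noteq> c i0" using x i0 by auto
        show "{p i0, x} \<in> Gpc V (p j0) (c j0)"
          using Gpc_mem1[of u V x "p j0"] uV x j0 i0 by auto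
        show "\<forall>i\<in>{1..n} - {i0, j0}. p i = p i0"
        proof
          fix i assume "i \<in> {1..n} - {i0, j0}"
          hence "i \<in> S" using Seq by blast
          thus "p i = p i0" using i0(2) unfolding S_def by simp
        qed
      qed
    next
      case False
      hence allu: "\<forall>i\<in>{1..n}. p i = u" by blast
      obtain i j where ij: "i \<in> {1..n}" "j \<in> {1..n}" "G i \<noteq> G j" using assms(6) by blast
      have cij: "c i \<noteq> c j" using ij Geq allu by metis
      have "i \<noteq> j" using ij by blast
      show ?thesis
      proof (rule red, rule special[OF assms(2,3,1) pV cVV pc ij(1) ij(2) \<open>i \<noteq> j\<close>])
        show "c j \<in> V" "c j \<noteq> p i" "c j \<noteq> c i" using cVV pc allu ij cij by metis+
        show "{p i, c j} \<in> Gpc V (p j) (c j)" using allu ij Gpc_mem2 by metis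
        show "\<forall>k\<in>{1..n} - {i, j}. p k = p i" using allu ij by auto
      qed
    qed
  qed
qed


end
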